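(* Let $\mathcal F$ be a convex cone of numerical functions on a set $Y$ and let $f_0\in\mathcal F$ with $0<f_0<\infty$. For every numerical function $\varphi\ge0$ on $Y$ let $F_\varphi:=\inf\{f\in\mathcal F: f\ge\varphi\}$. Then $F_{\varphi 1_{Y\setminus A}}=F_\varphi$ for every numerical function $\varphi\ge0$ on $Y$ and every $A\subset Y$ such that $\alpha\varphi\le F_\varphi\wedge(Mf_0)$ on $A$ for some $\alpha,M\in(1,\infty)$. *)

theory Defs
  imports "HOL-Analysis.Analysis"
begin

definition convex_cone :: "('a \<Rightarrow> ereal) set \<Rightarrow> bool" where
  "convex_cone \<F> \<longleftrightarrow>
     (\<forall>f\<in>\<F>. \<forall>g\<in>\<F>. (\<lambda>y. f y + g y) \<in> \<F>) \<and>
     (\<forall>f\<in>\<F>. \<forall>c::real. c \<ge> 0 \<longrightarrow> (\<lambda>y. ereal c * f y) \<in> \<F>)"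

definition red :: "('a \<Rightarrow> ereal) set \<Rightarrow> ('a \<Rightarrow> ereal) \<Rightarrow> 'a \<Rightarrow> ereal" where
  "red \<F> \<phi> y = Inf {f y | f. f \<in> \<F> \<and> (\<forall>z. \<phi> z \<le> f z)}"

end

theory Submission
  imports Defs
begin

lemma red_le:
  assumes "g \<in> \<F>" "\<forall>z. \<phi> z \<le> g z"
  shows "red \<F> \<phi> y \<le> g y"
  unfolding red_def by (rule Inf_lower) (use assms in blast)

lemma real_step:
  fixes p r c a al :: real
  assumes "al * p \<le> r + c * a" "0 \<le> r" "1 < al" "0 \<le> c" "0 < a"
  shows "p \<le> r + c / al * a"
proof -
  have "p \<le> (r + c * a) / al" using assms by (simp add: field_simps)
  also have "\<dots> = r / al + c / al * a" by (simp add: add_divide_distrib)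
  also have "r \<le> al * r" using assms by (simp add: mult_le_cancel_right1)
  hence "r / al \<le> r" using assms by (simp add: field_simps)
  hence "r / al + c / al * a \<le> r + c / al * a" by simp
  finally show ?thesis .
qed

theorem proposition3p3:
  fixes \<F> :: "('a \<Rightarrow> ereal) set" and f\<^sub>0 :: "'a \<Rightarrow> ereal"
    and \<phi> :: "'a \<Rightarrow> ereal" and A :: "'a set"
  assumes cone: "convex_cone \<F>"
    and f0_in: "f\<^sub>0 \<in> \<F>"
    and f0_pos: "\<forall>y. 0 < f\<^sub>0 y \<and> f\<^sub>0 y < \<infinity>"
    and phi_nonneg: "\<forall>y. 0 \<le> \<phi> y"
    and hA: "\<exists>\<alpha> M :: real. 1 < \<alpha> \<and> 1 < M \<and>
               (\<forall>y\<in>A. ereal \<alpha> * \<phi> y \<le> min (red \<F> \<phi> y) (ereal M * f\<^sub>0 y))"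
  shows "red \<F> (\<lambda>y. if y \<in> A then 0 else \<phi> y) = red \<F> \<phi>"
proof -
  define \<psi> where "\<psi> = (\<lambda>y. if y \<in> A then 0 else \<phi> y)"
  obtain \<alpha> M :: real where al: "1 < \<alpha>" and M: "1 < M"
    and hA1: "\<And>y. y \<in> A \<Longrightarrow> ereal \<alpha> * \<phi> y \<le> red \<F> \<phi> y"
    and hA2: "\<And>y. y \<in> A \<Longrightarrow> ereal \<alpha> * \<phi> y \<le> ereal M * f\<^sub>0 y"
    using hA by auto
  have add: "\<And>f g. f \<in> \<F> \<Longrightarrow> g \<in> \<F> \<Longrightarrow> (\<lambda>y. f y + g y) \<in> \<F>"
   and smul: "\<And>f c. f \<in> \<F> \<Longrightarrow> 0 \<le> c \<Longrightarrow> (\<lambda>y. ereal c * f y) \<in> \<F>"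
    using cone unfolding convex_cone_def by auto
  have f0r: "\<And>y. \<exists>a. f\<^sub>0 y = ereal a \<and> 0 < a"
  proof -
    fix y show "\<exists>a. f\<^sub>0 y = ereal a \<and> 0 < a" using f0_pos[rule_format, of y]
      by (cases "f\<^sub>0 y") auto
  qed
  have key: "red \<F> \<phi> y \<le> f y" if fF: "f \<in> \<F>" and fmaj: "\<forall>z. \<psi> z \<le> f z" for f y
  proof -
    have fnn: "\<And>z. 0 \<le> f z"
    proof -
      fix z show "0 \<le> f z" using fmaj[rule_format, of z] phi_nonneg[rule_format, of z]
        unfolding \<psi>_def by (cases "z \<in> A") auto
    qed
    have fphi: "\<phi> z \<le> f z" if "z \<notin> A" for z
      using fmaj[rule_format, of z] that unfolding \<psi>_def by simp
    have gin: "\<And>c. 0 \<le> c \<Longrightarrow> (\<lambda>y. f y + ereal c * f\<^sub>0 y) \<in> \<F>"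
      using add[OF fF smul[OF f0_in]] by blast
    have offA: "\<phi> z \<le> f z + ereal c * f\<^sub>0 z" if "z \<notin> A" "0 \<le> c" for z c
    proof -
      have "0 \<le> ereal c * f\<^sub>0 z" using that f0_pos by (simp add: less_imp_le)
      hence "f z + 0 \<le> f z + ereal c * f\<^sub>0 z" by (rule add_left_mono)
      thus ?thesis using fphi[OF that(1)] by simp
    qed
    have ind: "\<forall>z. red \<F> \<phi> z \<le> f z + ereal (M / \<alpha> ^ n) * f\<^sub>0 z" for n
    proof (induction n)
      case 0
      have "\<phi> z \<le> f z + ereal M * f\<^sub>0 z" for z
      proof (cases "z \<in> A")
        case True
        have "\<phi> z \<le> ereal \<alpha> * \<phi> z"
          using phi_nonneg[rule_format, of z] al
          by (cases "\<phi> z") (auto simp: mult_le_cancel_right1)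
        also have "\<dots> \<le> ereal M * f\<^sub>0 z" using hA2[OF True] .
        also have "\<dots> = 0 + ereal M * f\<^sub>0 z" by simp
        also have "\<dots> \<le> f z + ereal M * f\<^sub>0 z" using fnn[of z] by (rule add_right_mono)
        finally show ?thesis .
      next
        case False thus ?thesis using offA M by simp
      qed
      then show ?case using red_le[OF gin[of M]] M by simp
    next
      case (Suc n)
      define c where "c = M / \<alpha> ^ n"
      have c0: "0 \<le> c" using M al unfolding c_def by simp
      have cs: "M / \<alpha> ^ Suc n = c / \<alpha>" unfolding c_def by simp
      have "\<phi> z \<le> f z + ereal (c / \<alpha>) * f\<^sub>0 z" for z
      proof (cases "z \<in> A")
        case True
        have h: "ereal \<alpha> * \<phi> z \<le> f z + ereal c * f\<^sub>0 z"
          using order_trans[OF hA1[OF True] Suc.IH[rule_format, of z]] unfolding c_def .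
        obtain a where a: "f\<^sub>0 z = ereal a" "0 < a" using f0r by blast
        show ?thesis
        proof (cases "f z")
          case (real r)
          then show ?thesis
          proof (cases "\<phi> z")
            case (real p)
            have "\<alpha> * p \<le> r + c * a" using h \<open>f z = ereal r\<close> real a by simp
            moreover have "0 \<le> r" using fnn[of z] \<open>f z = ereal r\<close> by simp
            ultimately have "p \<le> r + c / \<alpha> * a" using real_step al c0 a by blast
            then show ?thesis using \<open>f z = ereal r\<close> real a by simp
          next
            case PInf
            then show ?thesis using h \<open>f z = ereal r\<close> a al by simp
          next
            case MInf
            then show ?thesis by simp
          qed
        next
          case PInf
          have "0 \<le> ereal (c / \<alpha>) * f\<^sub>0 z" using a c0 al by simp
          then show ?thesis using PInf by simp
        next
          case MInf
          then show ?thesis using fnn[of z] by simp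
        qed
      next
        case False thus ?thesis using offA c0 al by simp
      qed
      then show ?case using red_le[OF gin[of "c/\<alpha>"]] c0 al cs by simp
    qed
    show ?thesis
    proof (rule ereal_le_epsilon2)
      fix e :: real assume e: "0 < e"
      obtain a where a: "f\<^sub>0 y = ereal a" "0 < a" using f0r by blast
      have "1 / \<alpha> < 1" using al by simp
      obtain n where n: "(1 / \<alpha>) ^ n < e / (M * a)"
        using real_arch_pow_inv[of "e / (M * a)" "1/\<alpha>"] e M a(2) al by auto
      have "M / \<alpha> ^ n * a = M * a * (1/\<alpha>)^n" by (simp add: field_simps)
      also have "\<dots> < M * a * (e / (M * a))"
        using n M a(2) by (intro mult_strict_left_mono) auto
      also have "\<dots> = e" using M a(2) by simp
      finally have lt: "M / \<alpha> ^ n * a < e" .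
      have "red \<F> \<phi> y \<le> f y + ereal (M / \<alpha> ^ n) * f\<^sub>0 y" using ind by blast
      also have "\<dots> \<le> f y + ereal e" using lt a by (intro add_left_mono) simp
      finally show "red \<F> \<phi> y \<le> f y + ereal e" .
    qed
  qed
  have "red \<F> \<psi> y = red \<F> \<phi> y" for y
  proof (rule antisym)
    show "red \<F> \<psi> y \<le> red \<F> \<phi> y" unfolding red_def
    proof (rule Inf_superset_mono, clarify)
      fix f assume "f \<in> \<F>" "\<forall>z. \<phi> z \<le> f z"
      moreover have "\<forall>z. \<psi> z \<le> f z"
      proof
        fix z show "\<psi> z \<le> f z"
          using calculation(2)[rule_format, of z] phi_nonneg[rule_format, of z]
          unfolding \<psi>_def by (cases "z \<in> A") auto
      qed
      ultimately show "\<exists>g. f y = g y \<and> g \<in> \<F> \<and> (\<forall>z. \<psi> z \<le> g z)" by blast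
    qed
    show "red \<F> \<phi> y \<le> red \<F> \<psi> y" unfolding red_def[of _ \<psi>]
      by (rule Inf_greatest) (use key in blast)
  qed
  thus ?thesis unfolding \<psi>_def by blast
qed

end
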